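(* Let $M,N$ be positive integers. For $m,n,i,j\in\{1,\dots,N\}$ and $k,\ell\in\{1,\dots,M\}$ define $$A_{k\ell ij}^{mn}=\int_0^1\sin(m\pi x)\sin(k\pi x)\cos(i\pi x)\,dx\int_0^1\sin(n\pi y)\cos(\ell \pi y)\sin(j\pi y)\,dy,$$ $$B_{k\ell ij}^{mn}=\int_0^1\sin(m\pi x)\cos(k\pi x)\sin(i\pi x)\,dx\int_0^1\sin(n\pi y)\sin(\ell \pi y)\cos(j\pi y)\,dy,$$ and $$\hat K_{ij}^{mn}=\max\Big\{i\Big(\sum_{k,\ell=1}^M(k^2+\ell^2)^{-1}(A_{k\ell ij}^{mn})^2\Big)^{1/2},\ j\Big(\sum_{k,\ell=1}^M(k^2+\ell^2)^{-1}(B_{k\ell ij}^{mn})^2\Big)^{1/2}\Big\}.$$ Let $\alpha_{k\ell},\beta_{k\ell}$ ($k,\ell=1,\dots,M$) be real numbers satisfying $\frac{\pi^2}{4}\sum_{k,\ell=1}^M(k^2+\ell^2)(\alpha_{k\ell}^2+\beta_{k\ell}^2)=1$, and set $$F_{ij}^{mn}=\sum_{k,\ell=1}^M iA_{k\ell ij}^{mn}\alpha_{k\ell},\qquad G_{ij}^{mn}=\sum_{k,\ell=1}^M jB_{k\ell ij}^{mn}\beta_{k\ell}.$$ Then for all $m,n,i,j\in\{1,\dots,N\}$, $$-2\sqrt{2}\hat K_{ij}^{mn}\le F_{ij}^{mn}+G_{ij}^{mn}\le 2\sqrt{2}\hat K_{ij}^{mn}.$$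
   Context: The quantities arise from a spectral Galerkin discretization of the advection-diffusion equation on $[0,1]^2$ with $\phi=\sum_{i,j}a_{ij}(t)\sin(i\pi x)\sin(j\pi y)$ and velocity $v_1=\sum_{k,\ell}\alpha_{k\ell}\sin(k\pi x)\cos(\ell\pi y)$, $v_2=\sum_{k,\ell}\beta_{k\ell}\cos(k\pi x)\sin(\ell\pi y)$; the normalization $\frac{\pi^2}{4}\sum(k^2+\ell^2)(\alpha_{k\ell}^2+\beta_{k\ell}^2)=1$ is the condition $\|\nabla\mathbf v\|_{L^2}^2=1$. *)

theory Defs
  imports "HOL-Analysis.Analysis"
begin

definition coefA :: "nat \<Rightarrow> nat \<Rightarrow> nat \<Rightarrow> nat \<Rightarrow> nat \<Rightarrow> nat \<Rightarrow> real" where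
  "coefA m n k l i j =
     integral {0..1} (\<lambda>x. sin (real m * pi * x) * sin (real k * pi * x) * cos (real i * pi * x)) *
     integral {0..1} (\<lambda>y. sin (real n * pi * y) * cos (real l * pi * y) * sin (real j * pi * y))"

definition coefB :: "nat \<Rightarrow> nat \<Rightarrow> nat \<Rightarrow> nat \<Rightarrow> nat \<Rightarrow> nat \<Rightarrow> real" where
  "coefB m n k l i j =
     integral {0..1} (\<lambda>x. sin (real m * pi * x) * cos (real k * pi * x) * sin (real i * pi * x)) *
     integral {0..1} (\<lambda>y. sin (real n * pi * y) * sin (real l * pi * y) * cos (real j * pi * y))"

definition Khat :: "nat \<Rightarrow> nat \<Rightarrow> nat \<Rightarrow> nat \<Rightarrow> nat \<Rightarrow> real" where
  "Khat M m n i j = max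
     (real i * sqrt (\<Sum>k=1..M. \<Sum>l=1..M. (coefA m n k l i j)\<^sup>2 / (real k ^ 2 + real l ^ 2)))
     (real j * sqrt (\<Sum>k=1..M. \<Sum>l=1..M. (coefB m n k l i j)\<^sup>2 / (real k ^ 2 + real l ^ 2)))"

end

theory Submission
  imports Defs
begin

lemma cs_weighted:
  fixes x c w :: "'a \<Rightarrow> real"
  assumes "\<And>p. p \<in> S \<Longrightarrow> w p > 0"
  shows "\<bar>\<Sum>p\<in>S. x p * c p\<bar> \<le> sqrt (\<Sum>p\<in>S. (x p)\<^sup>2 / w p) * sqrt (\<Sum>p\<in>S. w p * (c p)\<^sup>2)"
proof -
  have eq: "(\<Sum>p\<in>S. x p * c p) = (\<Sum>p\<in>S. (x p / sqrt (w p)) * (sqrt (w p) * c p))"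
    by (rule sum.cong) (use assms in \<open>auto simp: less_imp_neq[symmetric]\<close>)
  have e1: "(\<Sum>p\<in>S. (x p / sqrt (w p))\<^sup>2) = (\<Sum>p\<in>S. (x p)\<^sup>2 / w p)"
    by (rule sum.cong) (use assms in \<open>auto simp: power_divide less_imp_le\<close>)
  have e2: "(\<Sum>p\<in>S. (sqrt (w p) * c p)\<^sup>2) = (\<Sum>p\<in>S. w p * (c p)\<^sup>2)"
    by (rule sum.cong) (use assms in \<open>auto simp: power_mult_distrib less_imp_le\<close>)
  have "(\<Sum>p\<in>S. x p * c p)\<^sup>2 \<le> (\<Sum>p\<in>S. (x p)\<^sup>2 / w p) * (\<Sum>p\<in>S. w p * (c p)\<^sup>2)"
    using Cauchy_Schwarz_ineq_sum[of "\<lambda>p. x p / sqrt (w p)" "\<lambda>p. sqrt (w p) * c p" S]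
    unfolding eq e1 e2 .
  then have "sqrt ((\<Sum>p\<in>S. x p * c p)\<^sup>2) \<le> sqrt ((\<Sum>p\<in>S. (x p)\<^sup>2 / w p) * (\<Sum>p\<in>S. w p * (c p)\<^sup>2))"
    using real_sqrt_le_mono by blast
  then show ?thesis by (simp add: real_sqrt_mult)
qed

lemma cs_double:
  fixes x c :: "nat \<Rightarrow> nat \<Rightarrow> real"
  shows "\<bar>\<Sum>k=1..M. \<Sum>l=1..M. x k l * c k l\<bar> \<le>
    sqrt (\<Sum>k=1..M. \<Sum>l=1..M. (x k l)\<^sup>2 / (real k ^ 2 + real l ^ 2)) *
    sqrt (\<Sum>k=1..M. \<Sum>l=1..M. (real k ^ 2 + real l ^ 2) * (c k l)\<^sup>2)"
proof -
  have "\<bar>\<Sum>p\<in>{1..M}\<times>{1..M}. x (fst p) (snd p) * c (fst p) (snd p)\<bar> \<le>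
    sqrt (\<Sum>p\<in>{1..M}\<times>{1..M}. (x (fst p) (snd p))\<^sup>2 / (real (fst p) ^ 2 + real (snd p) ^ 2)) *
    sqrt (\<Sum>p\<in>{1..M}\<times>{1..M}. (real (fst p) ^ 2 + real (snd p) ^ 2) * (c (fst p) (snd p))\<^sup>2)"
    by (rule cs_weighted) (auto simp: add_pos_pos)
  then show ?thesis by (simp add: sum.cartesian_product split_def)
qed

theorem mainTheorem2:
  fixes M N :: nat and \<alpha> \<beta> :: "nat \<Rightarrow> nat \<Rightarrow> real" and m n i j :: nat
  assumes "M \<ge> 1" and "N \<ge> 1"
    and norm: "pi\<^sup>2 / 4 * (\<Sum>k=1..M. \<Sum>l=1..M. (real k ^ 2 + real l ^ 2) * ((\<alpha> k l)\<^sup>2 + (\<beta> k l)\<^sup>2)) = 1"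
    and "m \<in> {1..N}" and "n \<in> {1..N}" and "i \<in> {1..N}" and "j \<in> {1..N}"
  shows "- 2 * sqrt 2 * Khat M m n i j \<le>
           (\<Sum>k=1..M. \<Sum>l=1..M. real i * coefA m n k l i j * \<alpha> k l)
         + (\<Sum>k=1..M. \<Sum>l=1..M. real j * coefB m n k l i j * \<beta> k l)
       \<and> (\<Sum>k=1..M. \<Sum>l=1..M. real i * coefA m n k l i j * \<alpha> k l)
         + (\<Sum>k=1..M. \<Sum>l=1..M. real j * coefB m n k l i j * \<beta> k l)
         \<le> 2 * sqrt 2 * Khat M m n i j"
proof -
  define F where "F = (\<Sum>k=1..M. \<Sum>l=1..M. real i * coefA m n k l i j * \<alpha> k l)"
  define G where "G = (\<Sum>k=1..M. \<Sum>l=1..M. real j * coefB m n k l i j * \<beta> k l)"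
  define SA where "SA = (\<Sum>k=1..M. \<Sum>l=1..M. (coefA m n k l i j)\<^sup>2 / (real k ^ 2 + real l ^ 2))"
  define SB where "SB = (\<Sum>k=1..M. \<Sum>l=1..M. (coefB m n k l i j)\<^sup>2 / (real k ^ 2 + real l ^ 2))"
  define a where "a = (\<Sum>k=1..M. \<Sum>l=1..M. (real k ^ 2 + real l ^ 2) * (\<alpha> k l)\<^sup>2)"
  define b where "b = (\<Sum>k=1..M. \<Sum>l=1..M. (real k ^ 2 + real l ^ 2) * (\<beta> k l)\<^sup>2)"
  define K where "K = Khat M m n i j"
  have K: "K = max (real i * sqrt SA) (real j * sqrt SB)"
    unfolding K_def Khat_def SA_def SB_def ..
  have a0: "a \<ge> 0" unfolding a_def by (intro sum_nonneg) auto
  have b0: "b \<ge> 0" unfolding b_def by (intro sum_nonneg) auto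
  have ab: "a + b = 4 / pi\<^sup>2"
  proof -
    have "a + b = (\<Sum>k=1..M. \<Sum>l=1..M. (real k ^ 2 + real l ^ 2) * ((\<alpha> k l)\<^sup>2 + (\<beta> k l)\<^sup>2))"
      unfolding a_def b_def by (simp add: sum.distrib[symmetric] distrib_left)
    then show ?thesis using norm by (simp add: field_simps)
  qed
  have hF: "\<bar>F\<bar> \<le> real i * sqrt SA * sqrt a"
  proof -
    have "F = real i * (\<Sum>k=1..M. \<Sum>l=1..M. coefA m n k l i j * \<alpha> k l)"
      unfolding F_def by (simp add: sum_distrib_left mult.assoc)
    moreover have "\<bar>\<Sum>k=1..M. \<Sum>l=1..M. coefA m n k l i j * \<alpha> k l\<bar> \<le> sqrt SA * sqrt a"
      unfolding SA_def a_def by (rule cs_double)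
    ultimately show ?thesis by (simp add: abs_mult mult.assoc mult_left_mono)
  qed
  have hG: "\<bar>G\<bar> \<le> real j * sqrt SB * sqrt b"
  proof -
    have "G = real j * (\<Sum>k=1..M. \<Sum>l=1..M. coefB m n k l i j * \<beta> k l)"
      unfolding G_def by (simp add: sum_distrib_left mult.assoc)
    moreover have "\<bar>\<Sum>k=1..M. \<Sum>l=1..M. coefB m n k l i j * \<beta> k l\<bar> \<le> sqrt SB * sqrt b"
      unfolding SB_def b_def by (rule cs_double)
    ultimately show ?thesis by (simp add: abs_mult mult.assoc mult_left_mono)
  qed
  have "real i * sqrt SA * sqrt a \<le> K * sqrt a"
    using K a0 by (intro mult_right_mono) auto
  moreover have "real j * sqrt SB * sqrt b \<le> K * sqrt b"
    using K b0 by (intro mult_right_mono) auto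
  ultimately have FG: "\<bar>F + G\<bar> \<le> K * (sqrt a + sqrt b)"
    using hF hG by (simp add: distrib_left)
  have "SA \<ge> 0" unfolding SA_def by (intro sum_nonneg divide_nonneg_nonneg) auto
  then have K0: "K \<ge> 0" using K by (simp add: le_max_iff_disj)
  have "(sqrt a + sqrt b)\<^sup>2 \<le> 2 * (a + b)"
  proof -
    have "(sqrt a + sqrt b)\<^sup>2 = a + b + 2 * sqrt a * sqrt b"
      using a0 b0 by (simp add: power2_sum)
    moreover have "2 * sqrt a * sqrt b \<le> a + b"
      using a0 b0 by (smt (verit) power2_sum real_sqrt_pow2 zero_le_power2 power2_diff)
    ultimately show ?thesis by simp
  qed
  also have "2 * (a + b) \<le> 8"
  proof -
    have "pi\<^sup>2 \<ge> 1" using pi_gt3 by (smt (verit) one_le_power)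
    then have "4 / pi\<^sup>2 \<le> 4" by (simp add: divide_le_eq)
    then show ?thesis using ab by simp
  qed
  finally have "sqrt a + sqrt b \<le> sqrt 8"
    using a0 b0 by (metis real_le_rsqrt real_sqrt_ge_zero add_nonneg_nonneg)
  moreover have "sqrt (8::real) = 2 * sqrt 2"
    by (metis real_sqrt_mult real_sqrt_four mult_2_right numeral_Bit0 mult.commute
        num_double numeral_times_numeral) 
  ultimately have "sqrt a + sqrt b \<le> 2 * sqrt 2" by simp
  then have "K * (sqrt a + sqrt b) \<le> K * (2 * sqrt 2)"
    using K0 by (simp add: mult_left_mono)
  with FG have "\<bar>F + G\<bar> \<le> 2 * sqrt 2 * K" by (simp add: mult_ac)
  then show ?thesis unfolding F_def[symmetric] G_def[symmetric] K_def[symmetric] by linarith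
qed

end
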